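(* Let $\overline{Q}(t,z)=\sum_{n\ge0}\overline{Q}_n(t)\frac{z^n}{n!}$, where $\overline{Q}_n(t)=\sum_{\pi}t^{\operatorname{des}(\pi)}$, the sum ranging over all quasi-Stirling permutations $\pi$ of size $n$ (so $\overline{Q}_0(t)=1$). Let $A(t,z)=\sum_{n\ge0}A_n(t)\frac{z^n}{n!}=\frac{1-t}{1-te^{(1-t)z}}$, where $A_n(t)=\sum_{\sigma\in S_n}t^{\operatorname{des}(\sigma)}$ are the Eulerian polynomials ($A_0(t)=1$). Then $\overline{Q}(t,z)=A(t,z\overline{Q}(t,z))$, that is, $$\overline{Q}(t,z)=\frac{1-t}{1-t\,e^{(1-t)z\overline{Q}(t,z)}}.$$ In particular, for all $n\ge0$, $$\overline{Q}_n(t)=\frac{n!}{n+1}\,[z^n]A(t,z)^{n+1}.$$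
   Context: A quasi-Stirling permutation of size $n$ is a permutation $\pi_1\cdots\pi_{2n}$ of the multiset $\{1,1,2,2,\dots,n,n\}$ with no indices $i<j<k<\ell$ such that $\pi_i=\pi_k$ and $\pi_j=\pi_\ell$; for $n=0$ there is only the empty permutation. For a sequence $\pi_1\cdots\pi_r$, an index $i\in\{1,\dots,r\}$ is a descent if $\pi_i>\pi_{i+1}$ or $i=r$, and $\operatorname{des}$ counts descents. $S_n$ is the set of permutations of $\{1,\dots,n\}$. $[z^n]F(z)$ denotes the coefficient of $z^n$ in $F$. *)

theory Defs
  imports "HOL-Computational_Algebra.Computational_Algebra"
begin

definition des :: "nat list \<Rightarrow> nat" where
  "des xs = card {i. i < length xs \<and> (i = length xs - 1 \<or> xs ! i > xs ! Suc i)}"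

text \<open>Quasi-Stirling permutations of size n: permutations of the multiset
  {1,1,...,n,n} avoiding the pattern 1212 / 2121.\<close>
definition quasi_stirling :: "nat \<Rightarrow> nat list set" where
  "quasi_stirling n = {xs. length xs = 2 * n \<and> set xs \<subseteq> {1..n}
     \<and> (\<forall>i\<in>{1..n}. count_list xs i = 2)
     \<and> \<not> (\<exists>a b c d. a < b \<and> b < c \<and> c < d \<and> d < length xs
            \<and> xs ! a = xs ! c \<and> xs ! b = xs ! d)}"

definition perms_list :: "nat \<Rightarrow> nat list set" where
  "perms_list n = {xs. distinct xs \<and> set xs = {1..n}}"

definition Qbar :: "nat \<Rightarrow> rat poly" where
  "Qbar n = (\<Sum>xs\<in>quasi_stirling n. monom 1 (des xs))"

definition Eulerian :: "nat \<Rightarrow> rat poly" where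
  "Eulerian n = (\<Sum>xs\<in>perms_list n. monom 1 (des xs))"

text \<open>Exponential generating functions in z with coefficients in Q[t].\<close>
definition QbarF :: "rat poly fps" where
  "QbarF = Abs_fps (\<lambda>n. smult (1 / fact n) (Qbar n))"

definition EulerF :: "rat poly fps" where
  "EulerF = Abs_fps (\<lambda>n. smult (1 / fact n) (Eulerian n))"

text \<open>e^((1-t)z) as a power series in z over Q[t].\<close>
definition exp_1mt :: "rat poly fps" where
  "exp_1mt = Abs_fps (\<lambda>n. smult (1 / fact n) ([:1, -1:] ^ n))"

end

theory Submission
  imports Defs "HOL-Combinatorics.Multiset_Permutations" "HOL-Library.Sublist"
begin


fun dd :: "nat \<Rightarrow> nat list \<Rightarrow> nat \<Rightarrow> nat" where
  "dd u [] v = (if v < u then 1 else 0)"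
| "dd u (x # xs) v = (if x < u then 1 else 0) + dd x xs v"

lemma dd_append: "dd u (xs @ y # ys) v = dd u xs y + dd y ys v"
  by (induction xs arbitrary: u) auto

lemma card_Suc_split:
  "card {i. i < Suc n \<and> P i} = (if P 0 then 1 else 0) + card {i. i < n \<and> P (Suc i)}"
proof -
  have e: "{i. i < Suc n \<and> P i} = {i::nat. i = 0 \<and> P 0} \<union> Suc ` {i. i < n \<and> P (Suc i)}"
  proof (rule set_eqI)
    fix i show "i \<in> {i. i < Suc n \<and> P i} \<longleftrightarrow> i \<in> {i::nat. i = 0 \<and> P 0} \<union> Suc ` {i. i < n \<and> P (Suc i)}"
      by (cases i) auto
  qed
  have "card {i. i < Suc n \<and> P i} = card {i::nat. i = 0 \<and> P 0} + card (Suc ` {i. i < n \<and> P (Suc i)})"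
  proof -
    have d: "{i::nat. i = 0 \<and> P 0} \<inter> Suc ` {i. i < n \<and> P (Suc i)} = {}" by blast
    have f1: "finite {i::nat. i = 0 \<and> P 0}" by simp
    have f2: "finite (Suc ` {i. i < n \<and> P (Suc i)})" by simp
    show ?thesis unfolding e using card_Un_disjoint[OF f1 f2 d] .
  qed
  also have "card (Suc ` {i. i < n \<and> P (Suc i)}) = card {i. i < n \<and> P (Suc i)}"
    by (rule card_image) simp
  also have "card {i::nat. i = 0 \<and> P 0} = (if P 0 then 1 else 0)" by auto
  finally show ?thesis .
qed

lemma des_Cons: "0 \<notin> set (x # xs) \<Longrightarrow> des (x # xs) = dd x xs 0"
proof (induction xs arbitrary: x)
  case Nil
  have "{i. i < length [x] \<and> (i = length [x] - 1 \<or> [x]!i > [x]!Suc i)} = {0}" by auto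
  then show ?case using Nil by (simp add: des_def)
next
  case (Cons y ys)
  have "des (x # y # ys) = card {i. i < Suc (Suc (length ys)) \<and> (i = Suc (length ys) \<or> (x#y#ys) ! i > (x#y#ys) ! Suc i)}"
    unfolding des_def by simp
  also have "\<dots> = (if y < x then 1 else 0) + card {i. i < Suc (length ys) \<and> (i = length ys \<or> (y#ys) ! i > (y#ys) ! Suc i)}"
    by (subst card_Suc_split) simp
  also have "card {i. i < Suc (length ys) \<and> (i = length ys \<or> (y#ys) ! i > (y#ys) ! Suc i)} = des (y # ys)"
    unfolding des_def by simp
  finally show ?case using Cons by simp
qed

lemma des_dd: "0 \<notin> set xs \<Longrightarrow> des xs = dd 0 xs 0"
  apply (cases xs)
   apply (simp add: des_def)
  apply (simp add: des_Cons)
  done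

abbreviation perms where "perms \<equiv> permutations_of_set"

lemma sum_Pow_card:
  fixes f :: "nat \<Rightarrow> 'a::comm_ring_1"
  assumes "finite T"
  shows "(\<Sum>A\<in>Pow T. f (card A)) = (\<Sum>k\<le>card T. of_nat (card T choose k) * f k)"
proof -
  have "(\<Sum>A\<in>Pow T. f (card A)) = (\<Sum>k\<le>card T. \<Sum>A\<in>{A\<in>Pow T. card A = k}. f (card A))"
    by (rule sum.group[symmetric]) (use assms in \<open>auto intro: card_mono\<close>)
  also have "\<dots> = (\<Sum>k\<le>card T. of_nat (card T choose k) * f k)"
  proof (rule sum.cong[OF refl])
    fix k
    have "{A\<in>Pow T. card A = k} = {A. A \<subseteq> T \<and> card A = k}" by auto
    then show "(\<Sum>A\<in>{A\<in>Pow T. card A = k}. f (card A)) = of_nat (card T choose k) * f k"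
      using n_subsets[OF assms, of k] by simp
  qed
  finally show ?thesis .
qed

lemma sum_Pow_swap:
  assumes "finite T"
  shows "(\<Sum>X\<in>Pow T. \<Sum>Y\<in>Pow (T - X). f X Y) = (\<Sum>Y\<in>Pow T. \<Sum>X\<in>Pow (T - Y). f X Y)"
proof -
  have e: "Pow (T - X) = {Y\<in>Pow T. X \<inter> Y = {}}" if "X \<subseteq> T" for X using that by auto
  have e': "Pow (T - Y) = {X\<in>Pow T. X \<inter> Y = {}}" if "Y \<subseteq> T" for Y using that by auto
  have "(\<Sum>X\<in>Pow T. \<Sum>Y\<in>Pow (T - X). f X Y) = (\<Sum>X\<in>Pow T. \<Sum>Y\<in>{Y\<in>Pow T. X \<inter> Y = {}}. f X Y)"
    by (rule sum.cong[OF refl]) (simp add: e)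
  also have "\<dots> = (\<Sum>Y\<in>Pow T. \<Sum>X\<in>{X\<in>Pow T. X \<inter> Y = {}}. f X Y)"
    by (rule sum.swap_restrict) (use assms in auto)
  also have "\<dots> = (\<Sum>Y\<in>Pow T. \<Sum>X\<in>Pow (T - Y). f X Y)"
    by (rule sum.cong[OF refl]) (simp add: e')
  finally show ?thesis .
qed

lemma sum_Pow_compl:
  assumes "finite T"
  shows "(\<Sum>A\<in>Pow T. f A) = (\<Sum>A\<in>Pow T. f (T - A))"
  by (rule sum.reindex_bij_witness[where i="\<lambda>A. T - A" and j="\<lambda>A. T - A"]) (auto simp: Diff_Diff_Int Int_absorb1)


lemma sum_perms_first:
  assumes "finite C" "C \<noteq> {}"
  shows "(\<Sum>x\<in>perms C. f x) = (\<Sum>c\<in>C. \<Sum>g\<in>perms (C - {c}). f (c # g))"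
proof -
  have "(\<Sum>x\<in>perms C. f x) = (\<Sum>x\<in>(\<Union>c\<in>C. (\<lambda>xs. c # xs) ` perms (C - {c})). f x)"
    using permutations_of_set_nonempty[OF assms(2)] by simp
  also have "\<dots> = (\<Sum>c\<in>C. \<Sum>x\<in>(\<lambda>xs. c # xs) ` perms (C - {c}). f x)"
    by (rule sum.UNION_disjoint) (use assms in auto)
  also have "\<dots> = (\<Sum>c\<in>C. \<Sum>g\<in>perms (C - {c}). f (c # g))"
    by (rule sum.cong) (auto simp: sum.reindex)
  finally show ?thesis .
qed



lemma sum_Pow_insert:
  assumes "finite S"
  shows "(\<Sum>C\<in>Pow S. \<Sum>c\<in>C. h C c) = (\<Sum>c\<in>S. \<Sum>C\<in>Pow (S - {c}). h (insert c C) c)"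
proof -
  have "(\<Sum>C\<in>Pow S. \<Sum>c\<in>C. h C c) = (\<Sum>C\<in>Pow S. \<Sum>c\<in>{c\<in>S. c \<in> C}. h C c)"
  proof (rule sum.cong[OF refl])
    fix C assume "C \<in> Pow S"
    then have "{c\<in>S. c \<in> C} = C" by auto
    then show "(\<Sum>c\<in>C. h C c) = (\<Sum>c\<in>{c\<in>S. c \<in> C}. h C c)" by simp
  qed
  also have "\<dots> = (\<Sum>c\<in>S. \<Sum>C\<in>{C\<in>Pow S. c \<in> C}. h C c)"
    by (rule sum.swap_restrict) (use assms in auto)
  also have "\<dots> = (\<Sum>c\<in>S. \<Sum>C\<in>Pow (S - {c}). h (insert c C) c)"
  proof (rule sum.cong[OF refl])
    fix c assume c: "c \<in> S"
    have "{C\<in>Pow S. c \<in> C} = insert c ` Pow (S - {c})"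
    proof
      show "{C\<in>Pow S. c \<in> C} \<subseteq> insert c ` Pow (S - {c})"
      proof
        fix C assume "C \<in> {C\<in>Pow S. c \<in> C}"
        then have "C = insert c (C - {c})" "C - {c} \<in> Pow (S - {c})" by auto
        then show "C \<in> insert c ` Pow (S - {c})" by (metis imageI)
      qed
    qed (use c in auto)
    moreover have "inj_on (insert c) (Pow (S - {c}))" by (rule inj_onI) auto
    ultimately show "(\<Sum>C\<in>{C\<in>Pow S. c \<in> C}. h C c) = (\<Sum>C\<in>Pow (S - {c}). h (insert c C) c)"
      by (simp add: sum.reindex)
  qed
  finally show ?thesis .
qed



lemma sum_perms_split:
  fixes f :: "nat list \<Rightarrow> 'b::comm_monoid_add"
  assumes "finite D" "m \<in> D"
  shows "(\<Sum>x\<in>perms D. f x) = (\<Sum>A\<in>Pow (D - {m}). \<Sum>\<alpha>\<in>perms A. \<Sum>\<beta>\<in>perms (D - {m} - A). f (\<alpha> @ m # \<beta>))"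
proof -
  define T where "T = Sigma (Pow (D - {m})) (\<lambda>A. perms A \<times> perms (D - {m} - A))"
  define \<phi> where "\<phi> = (\<lambda>(A::nat set, \<alpha>::nat list, \<beta>::nat list). \<alpha> @ m # \<beta>)"
  have fin: "finite T" unfolding T_def using assms by (auto intro!: finite_SigmaI)
  have inj: "inj_on \<phi> T"
  proof (rule inj_onI)
    fix x y assume "x \<in> T" "y \<in> T" "\<phi> x = \<phi> y"
    then obtain A \<alpha> \<beta> A' \<alpha>' \<beta>' where x: "x = (A, \<alpha>, \<beta>)" and y: "y = (A', \<alpha>', \<beta>')"
      and h: "A \<subseteq> D - {m}" "set \<alpha> = A" "set \<beta> = D - {m} - A"
        "A' \<subseteq> D - {m}" "set \<alpha>' = A'" "set \<beta>' = D - {m} - A'"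
      and e: "\<alpha> @ m # \<beta> = \<alpha>' @ m # \<beta>'"
      unfolding T_def \<phi>_def by (auto simp: permutations_of_set_def)
    have "m \<notin> set \<alpha>" "m \<notin> set \<beta>" using h by auto
    with e have "\<alpha> = \<alpha>' \<and> \<beta> = \<beta>'" by (subst (asm) append_Cons_eq_iff) auto
    with x y h show "x = y" by auto
  qed
  have img: "\<phi> ` T = perms D"
  proof
    show "\<phi> ` T \<subseteq> perms D"
      using assms unfolding T_def \<phi>_def by (auto simp: permutations_of_set_def)
  next
    show "perms D \<subseteq> \<phi> ` T"
    proof
      fix xs assume xs: "xs \<in> perms D"
      then have "m \<in> set xs" "distinct xs" "set xs = D" using assms by (auto simp: permutations_of_set_def)
      then obtain \<alpha> \<beta> where e: "xs = \<alpha> @ m # \<beta>" by (meson split_list)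
      have "(set \<alpha>, \<alpha>, \<beta>) \<in> T"
        using \<open>distinct xs\<close> \<open>set xs = D\<close> unfolding T_def e by (auto simp: permutations_of_set_def)
      moreover have "xs = \<phi> (set \<alpha>, \<alpha>, \<beta>)" unfolding \<phi>_def e by simp
      ultimately show "xs \<in> \<phi> ` T" by blast
    qed
  qed
  have "(\<Sum>x\<in>perms D. f x) = (\<Sum>x\<in>T. f (\<phi> x))"
    using sum.reindex[OF inj, of f] img by simp
  also have "\<dots> = (\<Sum>A\<in>Pow (D - {m}). \<Sum>p\<in>perms A \<times> perms (D - {m} - A). f (\<phi> (A, p)))"
    unfolding T_def by (subst sum.Sigma) (use assms in \<open>auto simp: split_beta\<close>)
  also have "\<dots> = (\<Sum>A\<in>Pow (D - {m}). \<Sum>\<alpha>\<in>perms A. \<Sum>\<beta>\<in>perms (D - {m} - A). f (\<alpha> @ m # \<beta>))"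
    unfolding \<phi>_def by (rule sum.cong[OF refl]) (simp add: sum.cartesian_product split_beta)
  finally show ?thesis .
qed




inductive qs :: "nat list \<Rightarrow> bool" where
  qs_Nil: "qs []"
| qs_Cons: "qs s \<Longrightarrow> qs r \<Longrightarrow> c \<notin> set s \<Longrightarrow> c \<notin> set r \<Longrightarrow> set s \<inter> set r = {}
     \<Longrightarrow> qs (c # s @ c # r)"

lemma qs_count: "qs xs \<Longrightarrow> x \<in> set xs \<Longrightarrow> count_list xs x = 2"
proof (induction rule: qs.induct)
  case qs_Nil then show ?case by simp
next
  case (qs_Cons s r c)
  show ?case
  proof (cases "x = c")
    case True then show ?thesis using qs_Cons by simp
  next
    case False
    then have "x \<in> set s \<or> x \<in> set r" using qs_Cons.prems by simp
    then show ?thesis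
    proof
      assume "x \<in> set s" then have "x \<notin> set r" using qs_Cons by auto
      then show ?thesis using qs_Cons \<open>x \<in> set s\<close> False by simp
    next
      assume "x \<in> set r" then have "x \<notin> set s" using qs_Cons by auto
      then show ?thesis using qs_Cons \<open>x \<in> set r\<close> False by simp
    qed
  qed
qed

lemma qs_length: "qs xs \<Longrightarrow> length xs = 2 * card (set xs)"
proof (induction rule: qs.induct)
  case qs_Nil then show ?case by simp
next
  case (qs_Cons s r c)
  have "card (set (c # s @ c # r)) = Suc (card (set s) + card (set r))"
    using qs_Cons by (simp add: card_Un_disjoint)
  then show ?case using qs_Cons by simp
qed

lemma qs_append: "qs a \<Longrightarrow> qs b \<Longrightarrow> set a \<inter> set b = {} \<Longrightarrow> qs (a @ b)"
proof (induction arbitrary: b rule: qs.induct)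
  case qs_Nil then show ?case by simp
next
  case (qs_Cons s r c)
  have "qs (r @ b)" using qs_Cons by auto
  then have "qs (c # s @ c # (r @ b))"
    by (rule qs.qs_Cons[OF qs_Cons(1)]) (use qs_Cons in auto)
  then show ?case by simp
qed

lemma qs_filter: "qs xs \<Longrightarrow> qs (filter P xs)"
proof (induction rule: qs.induct)
  case qs_Nil then show ?case by (simp add: qs.qs_Nil)
next
  case (qs_Cons s r c)
  show ?case
  proof (cases "P c")
    case True
    have "qs (c # filter P s @ c # filter P r)"
      by (rule qs.qs_Cons) (use qs_Cons in auto)
    then show ?thesis using True by simp
  next
    case False
    have "qs (filter P s @ filter P r)"
      by (rule qs_append) (use qs_Cons in auto)
    then show ?thesis using False by simp
  qed
qed

lemma qs_single: "\<not> qs [x]"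
  by (auto elim: qs.cases)

lemma qs_pat4: "\<not> qs [p, r, p, r]"
proof
  assume "qs [p, r, p, r]"
  then obtain c s r' where e: "[p, r, p, r] = c # s @ c # r'" and h: "qs s" "qs r'" "c \<notin> set s" "c \<notin> set r'"
    by (auto elim: qs.cases)
  then have c: "c = p" and e2: "[r, p, r] = s @ p # r'" by auto
  show False
  proof (cases s)
    case Nil then show ?thesis using e2 h c by auto
  next
    case (Cons a s')
    then show ?thesis using e2 h c qs_single by (cases s') auto
  qed
qed

lemma qs_nopat: assumes "qs xs" shows "\<not> subseq [p, r, p, r] xs"
proof
  assume sub: "subseq [p, r, p, r] xs"
  define w where "w = filter (\<lambda>x. x = p \<or> x = r) xs"
  have qw: "qs w" unfolding w_def by (rule qs_filter[OF assms])
  have sw: "subseq [p, r, p, r] w"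
    using subseq_filter[OF sub, of "\<lambda>x. x = p \<or> x = r"] unfolding w_def by simp
  have "set w \<subseteq> {p, r}" unfolding w_def by auto
  then have "card (set w) \<le> card {p, r}" by (intro card_mono) auto
  also have "card {p, r} \<le> 2" by (cases "p = r") auto
  finally have "card (set w) \<le> 2" .
  then have "length w \<le> 4" using qs_length[OF qw] by simp
  moreover have "length w \<ge> 4" using list_emb_length[OF sw] by simp
  ultimately have "w = [p, r, p, r]" using subseq_same_length[OF sw] by simp
  then show False using qw qs_pat4 by simp
qed

lemma nopat_qs:
  "(\<forall>x\<in>set xs. count_list xs x = 2) \<Longrightarrow> (\<forall>p r. \<not> subseq [p, r, p, r] xs) \<Longrightarrow> qs xs"
proof (induction xs rule: length_induct)
  case (1 xs)
  show ?case
  proof (cases xs)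
    case Nil then show ?thesis by (simp add: qs.qs_Nil)
  next
    case (Cons a rest)
    have "count_list rest a = 1" using 1(2) Cons by simp
    then have "a \<in> set rest" by (metis count_notin zero_neq_one)
    then obtain s r where rest: "rest = s @ a # r" and as: "a \<notin> set s" by (meson split_list_first)
    have "count_list r a = 0" using \<open>count_list rest a = 1\<close> rest as by simp
    then have ar: "a \<notin> set r" by (simp add: count_list_0_iff)
    have xs: "xs = a # s @ a # r" using Cons rest by simp
    have IH: "\<And>ys. length ys < length xs \<Longrightarrow> (\<forall>x\<in>set ys. count_list ys x = 2) \<Longrightarrow> (\<forall>p r. \<not> subseq [p, r, p, r] ys) \<Longrightarrow> qs ys"
      using 1(1) by blast
    have disj: "set s \<inter> set r = {}"
    proof (rule ccontr)
      assume "set s \<inter> set r \<noteq> {}"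
      then obtain x where "x \<in> set s" "x \<in> set r" by blast
      then have "subseq [x] s" "subseq [a, x] (a # r)" by (simp_all add: subseq_singleton_left)
      then have "subseq ([x] @ [a, x]) (s @ a # r)" by (rule list_emb_append_mono)
      then have "subseq [a, x, a, x] xs" using xs by simp
      then show False using 1(3) by blast
    qed
    have "qs s"
    proof (rule IH)
      show "length s < length xs" using xs by simp
      show "\<forall>x\<in>set s. count_list s x = 2"
      proof
        fix x assume "x \<in> set s"
        then have "x \<noteq> a" "x \<notin> set r" using as disj by auto
        moreover have "x \<in> set xs" using xs \<open>x \<in> set s\<close> by simp
        then have "count_list xs x = 2" using 1(2) by blast
        ultimately show "count_list s x = 2" using xs by simp
      qed
      show "\<forall>p r. \<not> subseq [p, r, p, r] s"
      proof (intro allI notI)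
        fix p q assume "subseq [p, q, p, q] s"
        then have "subseq [p, q, p, q] (s @ a # r)" by (rule subseq_rev_drop_many)
        then have "subseq [p, q, p, q] xs" using xs by (metis list_emb_Cons)
        then show False using 1(3) by blast
      qed
    qed
    moreover have "qs r"
    proof (rule IH)
      show "length r < length xs" using xs by simp
      show "\<forall>x\<in>set r. count_list r x = 2"
      proof
        fix x assume "x \<in> set r"
        then have "x \<noteq> a" "x \<notin> set s" using ar disj by auto
        moreover have "x \<in> set xs" using xs \<open>x \<in> set r\<close> by simp
        then have "count_list xs x = 2" using 1(2) by blast
        ultimately show "count_list r x = 2" using xs by simp
      qed
      show "\<forall>p r'. \<not> subseq [p, r', p, r'] r"
      proof (intro allI notI)
        fix p q assume "subseq [p, q, p, q] r"
        then have "subseq [p, q, p, q] ((a # s @ [a]) @ r)" by (rule subseq_drop_many)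
        then have "subseq [p, q, p, q] xs" using xs by simp
        then show False using 1(3) by blast
      qed
    qed
    ultimately show ?thesis using xs as ar disj by (simp add: qs.qs_Cons)
  qed
qed

lemma subseq_nth_drop:
  assumes "i < length xs" "j \<le> i" "subseq ys (drop (Suc i) xs)"
  shows "subseq (xs ! i # ys) (drop j xs)"
proof -
  have "drop j xs = take (i - j) (drop j xs) @ drop i xs"
    using assms by (metis append_take_drop_id drop_drop le_add_diff_inverse2)
  also have "drop i xs = xs ! i # drop (Suc i) xs" using assms by (simp add: Cons_nth_drop_Suc)
  finally show ?thesis using assms(3) by (metis list_emb_Cons2 subseq_drop_many)
qed

lemma subseq_idx:
  "subseq ys xs \<Longrightarrow> \<exists>f. (\<forall>i j. i < j \<longrightarrow> f i < f j) \<and> (\<forall>i<length ys. f i < length xs \<and> xs ! f i = ys ! i)"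
proof (induction rule: list_emb.induct)
  case (list_emb_Nil ys)
  show ?case by (rule exI[of _ id]) simp
next
  case (list_emb_Cons xs ys y)
  then obtain f where f: "\<forall>i j. i < j \<longrightarrow> f i < f j" "\<forall>i<length xs. f i < length ys \<and> ys ! f i = xs ! i" by blast
  show ?case by (rule exI[of _ "Suc \<circ> f"]) (use f in auto)
next
  case (list_emb_Cons2 x y xs ys)
  then obtain f where f: "\<forall>i j. i < j \<longrightarrow> f i < f j" "\<forall>i<length xs. f i < length ys \<and> ys ! f i = xs ! i" by blast
  define g where "g = (\<lambda>i. if i = 0 then 0 else Suc (f (i - 1)))"
  have "\<forall>i j. i < j \<longrightarrow> g i < g j" unfolding g_def using f(1) by auto
  moreover have "\<forall>i<length (x # xs). g i < length (y # ys) \<and> (y # ys) ! g i = (x # xs) ! i"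
  proof (intro allI impI)
    fix i assume i: "i < length (x # xs)"
    show "g i < length (y # ys) \<and> (y # ys) ! g i = (x # xs) ! i"
    proof (cases i)
      case 0 then show ?thesis using list_emb_Cons2 by (simp add: g_def)
    next
      case (Suc k) then show ?thesis using i f(2) by (simp add: g_def)
    qed
  qed
  ultimately show ?case by blast
qed

lemma pat_iff:
  "(\<exists>a b c d. a < b \<and> b < c \<and> c < d \<and> d < length xs \<and> xs ! a = xs ! c \<and> xs ! b = xs ! d)
   \<longleftrightarrow> (\<exists>p r. subseq [p, r, p, r] xs)"
proof
  assume "\<exists>a b c d. a < b \<and> b < c \<and> c < d \<and> d < length xs \<and> xs ! a = xs ! c \<and> xs ! b = xs ! d"
  then obtain a b c d where h: "a < b" "b < c" "c < d" "d < length xs" "xs ! a = xs ! c" "xs ! b = xs ! d"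
    by blast
  have "subseq [] (drop (Suc d) xs)" by simp
  then have "subseq [xs ! d] (drop (Suc c) xs)" using h by (intro subseq_nth_drop) auto
  then have "subseq [xs ! c, xs ! d] (drop (Suc b) xs)" using h by (intro subseq_nth_drop) auto
  then have "subseq [xs ! b, xs ! c, xs ! d] (drop (Suc a) xs)" using h by (intro subseq_nth_drop) auto
  then have "subseq [xs ! a, xs ! b, xs ! c, xs ! d] (drop 0 xs)" using h by (intro subseq_nth_drop) auto
  then have "subseq [xs ! a, xs ! b, xs ! a, xs ! b] xs" using h by simp
  then show "\<exists>p r. subseq [p, r, p, r] xs" by blast
next
  assume "\<exists>p r. subseq [p, r, p, r] xs"
  then obtain p r where "subseq [p, r, p, r] xs" by blast
  from subseq_idx[OF this] obtain f where f: "\<forall>i j. i < j \<longrightarrow> f i < f j"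
    "\<forall>i<4. f i < length xs \<and> xs ! f i = [p, r, p, r] ! i" by auto
  have "f 0 < f 1" "f 1 < f 2" "f 2 < f 3" using f(1) by auto
  moreover have "f 3 < length xs" "xs ! f 0 = p" "xs ! f 1 = r" "xs ! f 2 = p" "xs ! f 3 = r"
    using f(2) by (auto dest: spec[of _ 0] spec[of _ 1] spec[of _ 2] spec[of _ 3])
  ultimately show "\<exists>a b c d. a < b \<and> b < c \<and> c < d \<and> d < length xs \<and> xs ! a = xs ! c \<and> xs ! b = xs ! d"
    by metis
qed

definition QS :: "nat set \<Rightarrow> nat list set" where
  "QS S = {xs. qs xs \<and> set xs = S}"

lemma quasi_stirling_QS: "quasi_stirling n = QS {1..n}"
proof
  show "quasi_stirling n \<subseteq> QS {1..n}"
  proof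
    fix xs assume xs: "xs \<in> quasi_stirling n"
    have cnt: "\<forall>i\<in>{1..n}. count_list xs i = 2" and sub: "set xs \<subseteq> {1..n}"
      using xs by (auto simp: quasi_stirling_def)
    have "{1..n} \<subseteq> set xs"
    proof
      fix i assume "i \<in> {1..n}"
      then have "count_list xs i \<noteq> 0" using cnt by simp
      then show "i \<in> set xs" by (simp add: count_list_0_iff)
    qed
    then have st: "set xs = {1..n}" using sub by blast
    have "\<forall>p r. \<not> subseq [p, r, p, r] xs"
      using xs pat_iff[of xs] by (auto simp: quasi_stirling_def)
    then have "qs xs" using cnt st by (intro nopat_qs) auto
    then show "xs \<in> QS {1..n}" using st by (simp add: QS_def)
  qed
next
  show "QS {1..n} \<subseteq> quasi_stirling n"
  proof
    fix xs assume "xs \<in> QS {1..n}"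
    then have q: "qs xs" and st: "set xs = {1..n}" by (auto simp: QS_def)
    have "length xs = 2 * n" using qs_length[OF q] st by simp
    moreover have "\<forall>i\<in>{1..n}. count_list xs i = 2" using qs_count[OF q] st by simp
    moreover have "\<not> (\<exists>p r. subseq [p, r, p, r] xs)" using qs_nopat[OF q] by blast
    ultimately show "xs \<in> quasi_stirling n"
      using st pat_iff[of xs] unfolding quasi_stirling_def by auto
  qed
qed

lemma finite_QS: "finite S \<Longrightarrow> finite (QS S)"
proof -
  assume fin: "finite S"
  have "QS S \<subseteq> {xs. set xs \<subseteq> S \<and> length xs \<le> 2 * card S}"
    by (auto simp: QS_def qs_length)
  moreover have "finite {xs. set xs \<subseteq> S \<and> length xs \<le> 2 * card S}"
    using fin by (rule finite_lists_length_le)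
  ultimately show ?thesis by (rule finite_subset)
qed

lemma sum_QS_split:
  fixes f :: "nat list \<Rightarrow> 'b::comm_monoid_add"
  assumes "finite S" "S \<noteq> {}"
  shows "(\<Sum>x\<in>QS S. f x) = (\<Sum>c\<in>S. \<Sum>S1\<in>Pow (S - {c}). \<Sum>\<sigma>\<in>QS S1. \<Sum>\<tau>\<in>QS (S - {c} - S1). f (c # \<sigma> @ c # \<tau>))"
proof -
  define T where "T = Sigma S (\<lambda>c. Sigma (Pow (S - {c})) (\<lambda>S1. QS S1 \<times> QS (S - {c} - S1)))"
  define \<phi> where "\<phi> = (\<lambda>(c::nat, S1::nat set, \<sigma>::nat list, \<tau>::nat list). c # \<sigma> @ c # \<tau>)"
  have fS1: "finite S1" if "S1 \<subseteq> S - {c}" for S1 c using assms that by (meson finite_Diff rev_finite_subset)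
  have fin: "finite T" unfolding T_def using assms fS1
    by (intro finite_SigmaI finite_cartesian_product finite_QS) auto
  have inj: "inj_on \<phi> T"
  proof (rule inj_onI)
    fix x y assume "x \<in> T" "y \<in> T" "\<phi> x = \<phi> y"
    then obtain c S1 \<sigma> \<tau> c' S1' \<sigma>' \<tau>' where x: "x = (c, S1, \<sigma>, \<tau>)" and y: "y = (c', S1', \<sigma>', \<tau>')"
      and h: "S1 \<subseteq> S - {c}" "set \<sigma> = S1" "set \<tau> = S - {c} - S1"
        "S1' \<subseteq> S - {c'}" "set \<sigma>' = S1'" "set \<tau>' = S - {c'} - S1'"
      and e: "c # \<sigma> @ c # \<tau> = c' # \<sigma>' @ c' # \<tau>'"
      unfolding T_def \<phi>_def QS_def by auto
    have cc: "c = c'" using e by simp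
    have "c \<notin> set \<sigma>" "c \<notin> set \<tau>" "c \<notin> set \<sigma>'" using h cc by auto
    from e cc have "\<sigma> @ c # \<tau> = \<sigma>' @ c # \<tau>'" by simp
    then have "\<sigma> = \<sigma>' \<and> \<tau> = \<tau>'" using append_Cons_eq_iff[of c \<sigma> \<tau> \<sigma>' \<tau>'] \<open>c \<notin> set \<sigma>\<close> \<open>c \<notin> set \<tau>\<close> by simp
    with x y h cc show "x = y" by auto
  qed
  have img: "\<phi> ` T = QS S"
  proof
    show "\<phi> ` T \<subseteq> QS S"
    proof
      fix z assume "z \<in> \<phi> ` T"
      then obtain c S1 \<sigma> \<tau> where z: "z = c # \<sigma> @ c # \<tau>" and h: "c \<in> S" "S1 \<subseteq> S - {c}"
        "qs \<sigma>" "set \<sigma> = S1" "qs \<tau>" "set \<tau> = S - {c} - S1"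
        unfolding T_def \<phi>_def QS_def by auto
      have "qs z" unfolding z by (rule qs.qs_Cons) (use h in auto)
      moreover have "set z = S" using h z by auto
      ultimately show "z \<in> QS S" by (simp add: QS_def)
    qed
  next
    show "QS S \<subseteq> \<phi> ` T"
    proof
      fix z assume "z \<in> QS S"
      then have q: "qs z" and st: "set z = S" by (auto simp: QS_def)
      then have "z \<noteq> []" using assms by auto
      with q obtain c \<sigma> \<tau> where z: "z = c # \<sigma> @ c # \<tau>" and h: "qs \<sigma>" "qs \<tau>" "c \<notin> set \<sigma>"
        "c \<notin> set \<tau>" "set \<sigma> \<inter> set \<tau> = {}" by (auto elim: qs.cases)
      have "(c, set \<sigma>, \<sigma>, \<tau>) \<in> T" using h st z unfolding T_def QS_def by auto
      moreover have "z = \<phi> (c, set \<sigma>, \<sigma>, \<tau>)" unfolding \<phi>_def z by simp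
      ultimately show "z \<in> \<phi> ` T" by blast
    qed
  qed
  have "(\<Sum>x\<in>QS S. f x) = (\<Sum>x\<in>T. f (\<phi> x))"
    using sum.reindex[OF inj, of f] img by simp
  also have "\<dots> = (\<Sum>c\<in>S. \<Sum>p\<in>Sigma (Pow (S - {c})) (\<lambda>S1. QS S1 \<times> QS (S - {c} - S1)). f (\<phi> (c, p)))"
    unfolding T_def by (subst sum.Sigma) (use assms fS1 in \<open>auto simp: split_beta intro!: finite_SigmaI finite_QS\<close>)
  also have "\<dots> = (\<Sum>c\<in>S. \<Sum>S1\<in>Pow (S - {c}). \<Sum>p\<in>QS S1 \<times> QS (S - {c} - S1). f (\<phi> (c, S1, p)))"
    by (rule sum.cong[OF refl], subst sum.Sigma) (use assms fS1 in \<open>auto simp: split_beta intro!: finite_QS\<close>)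
  also have "\<dots> = (\<Sum>c\<in>S. \<Sum>S1\<in>Pow (S - {c}). \<Sum>\<sigma>\<in>QS S1. \<Sum>\<tau>\<in>QS (S - {c} - S1). f (c # \<sigma> @ c # \<tau>))"
    unfolding \<phi>_def by (intro sum.cong[OF refl]) (simp add: sum.cartesian_product split_beta)
  finally show ?thesis .
qed



abbreviation tt :: "rat poly" where "tt \<equiv> monom 1 1"

definition Pw :: "nat \<Rightarrow> nat set \<Rightarrow> nat \<Rightarrow> rat poly" where
  "Pw u D v = (\<Sum>x\<in>perms D. monom 1 (dd u x v))"

lemma monom_add1: "monom (1::rat) (m + n) = monom 1 m * monom 1 n"
  by (simp add: mult_monom)

lemma tt_nz: "tt \<noteq> 0" by simp

lemma dd_La: "(\<forall>x\<in>set \<alpha>. 0 < x \<and> x < M) \<Longrightarrow> 0 < u \<Longrightarrow> u < M \<Longrightarrow> dd u \<alpha> 0 = dd u \<alpha> M + 1"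
  by (induction \<alpha> arbitrary: u) auto

lemma dd_La0: assumes "\<forall>x\<in>set \<alpha>. 0 < x \<and> x < M" shows "dd 0 \<alpha> 0 = dd 0 \<alpha> M + (if \<alpha> = [] then 0 else 1)"
proof (cases \<alpha>)
  case Nil then show ?thesis by simp
next
  case (Cons a l)
  then have "dd a l 0 = dd a l M + 1" using assms by (intro dd_La) auto
  then show ?thesis using Cons by simp
qed

lemma dd_Lb: "(\<forall>x\<in>set \<beta>. x < M) \<Longrightarrow> v < M \<Longrightarrow> dd M \<beta> v = dd 0 \<beta> v + 1"
  by (cases \<beta>) auto

lemma dd_Lc: assumes "\<forall>x\<in>set c. 0 < x \<and> x < v" shows "dd v c v = dd 0 c 0"
proof (cases c)
  case Nil then show ?thesis by simp
next
  case (Cons a l)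
  then have "dd a l 0 = dd a l v + 1" using assms by (intro dd_La) auto
  then show ?thesis using Cons assms by simp
qed

lemma Eulerian_Pw: "Eulerian n = Pw 0 {1..n} 0"
proof -
  have "perms_list n = perms {1..n}"
    by (auto simp: perms_list_def permutations_of_set_def)
  moreover have "des x = dd 0 x 0" if "x \<in> perms {1..n}" for x
    using that by (intro des_dd) (auto simp: permutations_of_set_def)
  ultimately show ?thesis unfolding Eulerian_def Pw_def by (auto intro!: sum.cong)
qed

lemma Pw_empty: "Pw u {} v = monom 1 (dd u [] v)"
  by (simp add: Pw_def)

definition ew :: "nat \<Rightarrow> rat poly" where
  "ew k = (if k = 0 then tt else Eulerian k)"

lemma Rec1:
  assumes fin: "finite D" and z: "0 \<notin> D" and ne: "D \<noteq> {}"
  defines "M \<equiv> Max D"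
  shows "tt * Pw 0 D 0 = (\<Sum>A\<in>Pow (D - {M}). (if A = {} then tt else Pw 0 A 0) * (tt * Pw 0 (D - {M} - A) 0))"
proof -
  have MD: "M \<in> D" unfolding M_def using fin ne by simp
  have Mpos: "0 < M" using MD z by (cases M) auto
  have lt: "x < M" if "x \<in> D - {M}" for x
    using that fin unfolding M_def by (metis DiffE Max_ge insertI1 le_neq_implies_less)
  have pos: "0 < x" if "x \<in> D" for x using that z by (cases x) auto
  have "Pw 0 D 0 = (\<Sum>A\<in>Pow (D - {M}). \<Sum>\<alpha>\<in>perms A. \<Sum>\<beta>\<in>perms (D - {M} - A). monom 1 (dd 0 (\<alpha> @ M # \<beta>) 0))"
    unfolding Pw_def by (rule sum_perms_split[OF fin MD])
  also have "\<dots> = (\<Sum>A\<in>Pow (D - {M}). (\<Sum>\<alpha>\<in>perms A. monom 1 (dd 0 \<alpha> M)) * (\<Sum>\<beta>\<in>perms (D - {M} - A). monom 1 (dd M \<beta> 0)))"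
    by (simp add: dd_append monom_add1 sum_product)
  also have "\<dots> = (\<Sum>A\<in>Pow (D - {M}). (\<Sum>\<alpha>\<in>perms A. monom 1 (dd 0 \<alpha> M)) * (tt * Pw 0 (D - {M} - A) 0))"
  proof (rule sum.cong[OF refl])
    fix A assume A: "A \<in> Pow (D - {M})"
    have "(\<Sum>\<beta>\<in>perms (D - {M} - A). monom 1 (dd M \<beta> 0)) = (\<Sum>\<beta>\<in>perms (D - {M} - A). tt * monom 1 (dd 0 \<beta> 0))"
    proof (rule sum.cong[OF refl])
      fix \<beta> assume "\<beta> \<in> perms (D - {M} - A)"
      then have "\<forall>x\<in>set \<beta>. x < M" using lt by (auto simp: permutations_of_set_def)
      then have "dd M \<beta> 0 = dd 0 \<beta> 0 + 1" using Mpos by (intro dd_Lb) auto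
      then show "monom 1 (dd M \<beta> 0) = tt * monom 1 (dd 0 \<beta> 0)" by (simp add: mult_monom)
    qed
    then show "(\<Sum>\<alpha>\<in>perms A. monom 1 (dd 0 \<alpha> M)) * (\<Sum>\<beta>\<in>perms (D - {M} - A). monom 1 (dd M \<beta> 0))
      = (\<Sum>\<alpha>\<in>perms A. monom 1 (dd 0 \<alpha> M)) * (tt * Pw 0 (D - {M} - A) 0)"
      by (simp add: Pw_def sum_distrib_left)
  qed
  finally have eq: "Pw 0 D 0 = (\<Sum>A\<in>Pow (D - {M}). (\<Sum>\<alpha>\<in>perms A. monom 1 (dd 0 \<alpha> M)) * (tt * Pw 0 (D - {M} - A) 0))" .
  have key: "tt * (\<Sum>\<alpha>\<in>perms A. monom 1 (dd 0 \<alpha> M)) = (if A = {} then tt else Pw 0 A 0)" if A: "A \<in> Pow (D - {M})" for A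
  proof (cases "A = {}")
    case True then show ?thesis by simp
  next
    case False
    have "tt * (\<Sum>\<alpha>\<in>perms A. monom 1 (dd 0 \<alpha> M)) = (\<Sum>\<alpha>\<in>perms A. monom 1 (dd 0 \<alpha> 0))"
      unfolding sum_distrib_left
    proof (rule sum.cong[OF refl])
      fix \<alpha> assume al: "\<alpha> \<in> perms A"
      then have "\<alpha> \<noteq> []" using False by (auto simp: permutations_of_set_def)
      moreover have "\<forall>x\<in>set \<alpha>. 0 < x \<and> x < M" using al A lt pos by (auto simp: permutations_of_set_def)
      ultimately have "dd 0 \<alpha> 0 = dd 0 \<alpha> M + 1" using dd_La0[of \<alpha> M] by simp
      then show "tt * monom 1 (dd 0 \<alpha> M) = monom 1 (dd 0 \<alpha> 0)" by (simp add: mult_monom)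
    qed
    then show ?thesis using False by (simp add: Pw_def)
  qed
  have "tt * Pw 0 D 0 = (\<Sum>A\<in>Pow (D - {M}). (tt * (\<Sum>\<alpha>\<in>perms A. monom 1 (dd 0 \<alpha> M))) * (tt * Pw 0 (D - {M} - A) 0))"
    unfolding eq by (subst sum_distrib_left) (simp only: mult.assoc)
  also have "\<dots> = (\<Sum>A\<in>Pow (D - {M}). (if A = {} then tt else Pw 0 A 0) * (tt * Pw 0 (D - {M} - A) 0))"
    by (rule sum.cong[OF refl]) (simp only: key)
  finally show ?thesis .
qed

definition Rsum :: "nat \<Rightarrow> rat poly" where
  "Rsum n = (\<Sum>k\<le>n - 1. of_nat (n - 1 choose k) * (ew k * (tt * Eulerian (n - 1 - k))))"

lemma Rec_card:
  assumes fin: "finite D" and z: "0 \<notin> D" and n: "card D = n" "0 < n"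
    and IH: "\<And>A. finite A \<Longrightarrow> 0 \<notin> A \<Longrightarrow> card A < n \<Longrightarrow> Pw 0 A 0 = Eulerian (card A)"
  shows "tt * Pw 0 D 0 = Rsum n"
proof -
  have ne: "D \<noteq> {}" using n by auto
  define M where "M = Max D"
  have MD: "M \<in> D" unfolding M_def using fin ne by simp
  have cM: "card (D - {M}) = n - 1" using MD fin n by simp
  have "tt * Pw 0 D 0 = (\<Sum>A\<in>Pow (D - {M}). (if A = {} then tt else Pw 0 A 0) * (tt * Pw 0 (D - {M} - A) 0))"
    unfolding M_def by (rule Rec1[OF fin z ne])
  also have "\<dots> = (\<Sum>A\<in>Pow (D - {M}). ew (card A) * (tt * Eulerian (n - 1 - card A)))"
  proof (rule sum.cong[OF refl])
    fix A assume A: "A \<in> Pow (D - {M})"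
    have fA: "finite A" using A fin by (meson PowD finite_Diff rev_finite_subset)
    have cA: "card A \<le> n - 1" using A cM fin by (metis PowD card_mono finite_Diff)
    have c1: "card A < n" using cA n by simp
    have c2: "card (D - {M} - A) = n - 1 - card A" using A cM fin fA by (simp add: card_Diff_subset)
    have "Pw 0 (D - {M} - A) 0 = Eulerian (card (D - {M} - A))"
      using fin z n by (intro IH) (auto simp: c2)
    moreover have "(if A = {} then tt else Pw 0 A 0) = ew (card A)"
      using IH[OF fA _ c1] z A fA by (auto simp: ew_def)
    ultimately show "(if A = {} then tt else Pw 0 A 0) * (tt * Pw 0 (D - {M} - A) 0) = ew (card A) * (tt * Eulerian (n - 1 - card A))"
      by (simp add: c2)
  qed
  also have "\<dots> = Rsum n"
    unfolding Rsum_def using sum_Pow_card[of "D - {M}" "\<lambda>k. ew k * (tt * Eulerian (n - 1 - k))"] fin cM by simp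
  finally show ?thesis .
qed

lemma Pw0_eq: "finite D \<Longrightarrow> 0 \<notin> D \<Longrightarrow> Pw 0 D 0 = Eulerian (card D)"
proof (induction "card D" arbitrary: D rule: less_induct)
  case less
  show ?case
  proof (cases "card D = 0")
    case True
    then have "D = {}" using less by simp
    then show ?thesis by (simp add: Eulerian_Pw)
  next
    case False
    define n where "n = card D"
    have IH: "\<And>A. finite A \<Longrightarrow> 0 \<notin> A \<Longrightarrow> card A < n \<Longrightarrow> Pw 0 A 0 = Eulerian (card A)"
      using less n_def by blast
    have "tt * Pw 0 D 0 = Rsum n" using Rec_card[OF less(2,3) n_def[symmetric] _ IH] False n_def by simp
    moreover have "tt * Pw 0 {1..n} 0 = Rsum n" using Rec_card[of "{1..n}" n, OF _ _ _ _ IH] False n_def by simp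
    ultimately have "Pw 0 D 0 = Pw 0 {1..n} 0" using tt_nz by (metis mult_left_cancel)
    then show ?thesis by (simp add: Eulerian_Pw n_def)
  qed
qed

lemma Eulerian_0: "Eulerian 0 = 1"
  by (simp add: Eulerian_Pw Pw_def)

lemma Eulerian_rec:
  assumes "0 < n"
  shows "Eulerian n = (\<Sum>k\<le>n - 1. of_nat (n - 1 choose k) * (ew k * Eulerian (n - 1 - k)))"
proof -
  have "tt * Pw 0 {1..n} 0 = Rsum n"
    by (rule Rec_card) (use assms Pw0_eq in auto)
  then have "tt * Eulerian n = tt * (\<Sum>k\<le>n - 1. of_nat (n - 1 choose k) * (ew k * Eulerian (n - 1 - k)))"
    unfolding Rsum_def Eulerian_Pw[symmetric] sum_distrib_left by (simp add: algebra_simps)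
  then show ?thesis using tt_nz by (metis mult_left_cancel)
qed

lemma Pwv_eq:
  assumes fin: "finite C" and z: "0 \<notin> C" and v: "v \<notin> C"
  shows "Pw v C v = Eulerian (card C)"
proof (cases "v = 0")
  case True then show ?thesis using Pw0_eq fin z by simp
next
  case False
  then have vpos: "0 < v" by simp
  have pos: "0 < x" if "x \<in> C" for x using that z by (cases x) auto
  show ?thesis
  proof (cases "\<forall>x\<in>C. x < v")
    case True
    have "Pw v C v = Pw 0 C 0" unfolding Pw_def
    proof (rule sum.cong[OF refl])
      fix c assume "c \<in> perms C"
      then have "\<forall>x\<in>set c. 0 < x \<and> x < v" using True pos by (auto simp: permutations_of_set_def)
      then show "monom 1 (dd v c v) = monom 1 (dd 0 c 0)" by (simp add: dd_Lc)
    qed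
    then show ?thesis using Pw0_eq fin z by simp
  next
    case False
    then obtain y where y: "y \<in> C" "\<not> y < v" by blast
    have ne: "C \<noteq> {}" using y by auto
    define M where "M = Max C"
    have MC: "M \<in> C" unfolding M_def using fin ne by simp
    have vM: "v < M" using y v fin unfolding M_def by (metis Max_ge le_trans linorder_not_less nat_less_le)
    have lt: "x < M" if "x \<in> C - {M}" for x
      using that fin unfolding M_def by (metis DiffE Max_ge insertI1 le_neq_implies_less)
    define D where "D = insert v (C - {M})"
    have Dv: "D - {v} = C - {M}" unfolding D_def using v by auto
    have finD: "finite D" "v \<in> D" "0 \<notin> D" unfolding D_def using fin z vpos by auto
    have c0: "0 < card C" using fin ne by (simp add: card_gt_0_iff)
    have "card D = Suc (card (C - {M}))" unfolding D_def using fin v by simp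
    also have "card (C - {M}) = card C - 1" using fin MC by simp
    finally have cD: "card D = card C" using c0 by simp
    have "Pw v C v = (\<Sum>A\<in>Pow (C - {M}). \<Sum>\<alpha>\<in>perms A. \<Sum>\<beta>\<in>perms (C - {M} - A). monom 1 (dd v (\<alpha> @ M # \<beta>) v))"
      unfolding Pw_def by (rule sum_perms_split[OF fin MC])
    also have "\<dots> = (\<Sum>A\<in>Pow (C - {M}). \<Sum>\<alpha>\<in>perms A. \<Sum>\<beta>\<in>perms (C - {M} - A). monom 1 (dd 0 \<beta> v + dd v \<alpha> 0))"
    proof (intro sum.cong[OF refl])
      fix A \<alpha> \<beta> assume A: "A \<in> Pow (C - {M})" and al: "\<alpha> \<in> perms A" and be: "\<beta> \<in> perms (C - {M} - A)"
      have "\<forall>x\<in>set \<alpha>. 0 < x \<and> x < M" using al A lt pos by (auto simp: permutations_of_set_def)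
      then have "dd v \<alpha> 0 = dd v \<alpha> M + 1" using vpos vM by (intro dd_La) auto
      moreover have "\<forall>x\<in>set \<beta>. x < M" using be lt by (auto simp: permutations_of_set_def)
      then have "dd M \<beta> v = dd 0 \<beta> v + 1" using vM by (intro dd_Lb) auto
      ultimately show "monom 1 (dd v (\<alpha> @ M # \<beta>) v) = monom 1 (dd 0 \<beta> v + dd v \<alpha> 0)"
        by (simp add: dd_append algebra_simps)
    qed
    also have "\<dots> = (\<Sum>A\<in>Pow (C - {M}). \<Sum>\<beta>\<in>perms (C - {M} - A). \<Sum>\<alpha>\<in>perms A. monom 1 (dd 0 \<beta> v + dd v \<alpha> 0))"
      by (rule sum.cong[OF refl]) (rule sum.swap)
    also have "\<dots> = (\<Sum>A\<in>Pow (C - {M}). \<Sum>\<beta>\<in>perms A. \<Sum>\<alpha>\<in>perms (C - {M} - A). monom 1 (dd 0 \<beta> v + dd v \<alpha> 0))"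
    proof -
      have "(\<Sum>A\<in>Pow (C - {M}). \<Sum>\<beta>\<in>perms A. \<Sum>\<alpha>\<in>perms (C - {M} - A). monom 1 (dd 0 \<beta> v + dd v \<alpha> 0))
          = (\<Sum>A\<in>Pow (C - {M}). \<Sum>\<beta>\<in>perms (C - {M} - A). \<Sum>\<alpha>\<in>perms (C - {M} - (C - {M} - A)). monom 1 (dd 0 \<beta> v + dd v \<alpha> 0))"
        using fin by (intro sum_Pow_compl) auto
      also have "\<dots> = (\<Sum>A\<in>Pow (C - {M}). \<Sum>\<beta>\<in>perms (C - {M} - A). \<Sum>\<alpha>\<in>perms A. monom 1 (dd 0 \<beta> v + dd v \<alpha> 0))"
      proof (rule sum.cong[OF refl])
        fix A assume "A \<in> Pow (C - {M})"
        then have "C - {M} - (C - {M} - A) = A" by auto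
        then show "(\<Sum>\<beta>\<in>perms (C - {M} - A). \<Sum>\<alpha>\<in>perms (C - {M} - (C - {M} - A)). monom 1 (dd 0 \<beta> v + dd v \<alpha> 0))
          = (\<Sum>\<beta>\<in>perms (C - {M} - A). \<Sum>\<alpha>\<in>perms A. monom 1 (dd 0 \<beta> v + dd v \<alpha> 0))" by simp
      qed
      finally show ?thesis by (rule sym)
    qed
    also have "\<dots> = Pw 0 D 0"
    proof -
      have "Pw 0 D 0 = (\<Sum>A\<in>Pow (D - {v}). \<Sum>\<alpha>\<in>perms A. \<Sum>\<beta>\<in>perms (D - {v} - A). monom 1 (dd 0 (\<alpha> @ v # \<beta>) 0))"
        unfolding Pw_def by (rule sum_perms_split[OF finD(1,2)])
      then show ?thesis by (simp add: Dv dd_append)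
    qed
    also have "\<dots> = Eulerian (card C)" using Pw0_eq finD cD by simp
    finally show ?thesis .
  qed
qed



definition Fw :: "nat \<Rightarrow> nat set \<Rightarrow> nat \<Rightarrow> rat poly" where
  "Fw u S v = (\<Sum>x\<in>QS S. monom 1 (dd u x v))"

lemma Qbar_Fw: "Qbar n = Fw 0 {1..n} 0"
proof -
  have "des x = dd 0 x 0" if "x \<in> QS {1..n}" for x
    using that by (intro des_dd) (auto simp: QS_def)
  then show ?thesis unfolding Qbar_def Fw_def quasi_stirling_QS by (auto intro!: sum.cong)
qed

lemma QS_empty: "QS {} = {[]}"
  by (auto simp: QS_def qs.qs_Nil)

fun G :: "nat \<Rightarrow> nat \<Rightarrow> rat poly" where
  "G 0 m = (if m = 0 then 1 else 0)"
| "G (Suc k) m = (\<Sum>j\<le>m. of_nat (m choose j) * (Qbar j * G k (m - j)))"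

definition Kf :: "nat \<Rightarrow> rat poly" where
  "Kf m = (\<Sum>k\<le>m. of_nat (m choose k) * (Eulerian k * G k (m - k)))"

definition RHS :: "nat \<Rightarrow> nat set \<Rightarrow> nat \<Rightarrow> rat poly" where
  "RHS u S v = (\<Sum>C\<in>Pow S. Pw u C v * G (card C) (card S - card C))"

lemma finite_Pow_sub: "finite S \<Longrightarrow> C \<in> Pow S \<Longrightarrow> finite C"
  by (meson PowD rev_finite_subset)

lemma RHS_cyc:
  assumes "finite S" "0 \<notin> S" "c \<notin> S"
  shows "RHS c S c = Kf (card S)"
proof -
  have "RHS c S c = (\<Sum>C\<in>Pow S. Eulerian (card C) * G (card C) (card S - card C))"
    unfolding RHS_def
  proof (rule sum.cong[OF refl])
    fix C assume C: "C \<in> Pow S"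
    have "Pw c C c = Eulerian (card C)"
      using assms C by (intro Pwv_eq) (auto intro: finite_Pow_sub)
    then show "Pw c C c * G (card C) (card S - card C) = Eulerian (card C) * G (card C) (card S - card C)" by simp
  qed
  also have "\<dots> = Kf (card S)"
    unfolding Kf_def using sum_Pow_card[OF assms(1), of "\<lambda>k. Eulerian k * G k (card S - k)"] by simp
  finally show ?thesis .
qed

lemma sum_mult_sum:
  fixes i :: "'a::comm_semiring_1"
  shows "(\<Sum>x\<in>A. \<Sum>y\<in>B. i * (f x * g y)) = i * ((\<Sum>x\<in>A. f x) * (\<Sum>y\<in>B. g y))"
  unfolding sum_product[of f A g B] by (simp add: sum_distrib_left)

lemma dd_qs: "dd u (c # \<sigma> @ c # \<tau>) v = (if c < u then 1 else 0) + dd c \<sigma> c + dd c \<tau> v"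
  by (simp add: dd_append)

lemma Pw_first:
  assumes "finite C" "C \<noteq> {}"
  shows "Pw u C v = (\<Sum>c\<in>C. monom 1 (if c < u then 1 else 0) * Pw c (C - {c}) v)"
  unfolding Pw_def by (subst sum_perms_first[OF assms]) (simp add: monom_add1 sum_distrib_left)

lemma G_Suc_Pow:
  assumes "finite T"
  shows "G (Suc k) (card T) = (\<Sum>S1\<in>Pow T. Qbar (card S1) * G k (card T - card S1))"
  using sum_Pow_card[OF assms, of "\<lambda>j. Qbar j * G k (card T - j)"] by simp

lemma Fw_main:
  "finite S \<Longrightarrow> 0 \<notin> S \<Longrightarrow> u \<notin> S \<Longrightarrow> v \<notin> S \<Longrightarrow> Fw u S v = RHS u S v"
proof (induction "card S" arbitrary: S u v rule: less_induct)
  case less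
  define n where "n = card S"
  have IH: "\<And>S' u v. card S' < n \<Longrightarrow> finite S' \<Longrightarrow> 0 \<notin> S' \<Longrightarrow> u \<notin> S' \<Longrightarrow> v \<notin> S' \<Longrightarrow> Fw u S' v = RHS u S' v"
    using less n_def by blast
  show ?case
  proof (cases "S = {}")
    case True
    then show ?thesis by (simp add: Fw_def RHS_def QS_empty Pw_empty)
  next
    case False
    have npos: "0 < n" using False less(2) n_def by (simp add: card_gt_0_iff)
    have QB: "Qbar m = Kf m" if "m < n" for m
    proof -
      have "Qbar m = Fw 0 {1..m} 0" by (rule Qbar_Fw)
      also have "\<dots> = RHS 0 {1..m} 0" using that by (intro IH) auto
      also have "\<dots> = Kf m" using RHS_cyc[of "{1..m}" 0] by simp
      finally show ?thesis .
    qed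
    have cS1: "card (S - {c} - S1) = n - 1 - card S1" if "c \<in> S" "S1 \<subseteq> S - {c}" for c S1
      using that less(2) n_def by (simp add: card_Diff_subset finite_subset)
    have FC: "Fw c S1 c = Qbar (card S1)" if "c \<in> S" "S1 \<subseteq> S - {c}" for c S1
    proof -
      have fS1: "finite S1" using that less(2) by (meson finite_Diff rev_finite_subset)
      have lt: "card S1 < n" using that less(2) n_def
        by (metis Diff_subset card_Diff1_less card_mono finite_Diff le_less_trans)
      have "Fw c S1 c = RHS c S1 c" using that less fS1 lt by (intro IH) auto
      also have "\<dots> = Kf (card S1)" using that less fS1 by (intro RHS_cyc) auto
      also have "\<dots> = Qbar (card S1)" using QB lt by simp
      finally show ?thesis .
    qed
    define ind where "ind = (\<lambda>c::nat. monom (1::rat) (if c < u then 1 else 0))"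
    define \<Phi> where "\<Phi> = (\<lambda>c (S1::nat set) C'. ind c * Qbar (card S1) * (Pw c C' v * G (card C') (n - 1 - card S1 - card C')))"
    have "Fw u S v = (\<Sum>c\<in>S. \<Sum>S1\<in>Pow (S - {c}). \<Sum>\<sigma>\<in>QS S1. \<Sum>\<tau>\<in>QS (S - {c} - S1). monom 1 (dd u (c # \<sigma> @ c # \<tau>) v))"
      unfolding Fw_def by (rule sum_QS_split[OF less(2) False])
    also have "\<dots> = (\<Sum>c\<in>S. \<Sum>S1\<in>Pow (S - {c}). ind c * (Fw c S1 c * Fw c (S - {c} - S1) v))"
    proof (intro sum.cong[OF refl])
      fix c :: nat and S1 :: "nat set"
      have e: "monom 1 (dd u (c # \<sigma> @ c # \<tau>) v) = ind c * (monom 1 (dd c \<sigma> c) * monom 1 (dd c \<tau> v))" for \<sigma> \<tau>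
        unfolding dd_qs ind_def by (simp add: mult_monom)
      show "(\<Sum>\<sigma>\<in>QS S1. \<Sum>\<tau>\<in>QS (S - {c} - S1). monom 1 (dd u (c # \<sigma> @ c # \<tau>) v)) = ind c * (Fw c S1 c * Fw c (S - {c} - S1) v)"
        unfolding e Fw_def by (rule sum_mult_sum)
    qed
    also have "\<dots> = (\<Sum>c\<in>S. \<Sum>S1\<in>Pow (S - {c}). \<Sum>C'\<in>Pow (S - {c} - S1). \<Phi> c S1 C')"
    proof (intro sum.cong[OF refl])
      fix c S1 assume c: "c \<in> S" and S1: "S1 \<in> Pow (S - {c})"
      have "Fw c (S - {c} - S1) v = RHS c (S - {c} - S1) v"
      proof (rule IH)
        show "card (S - {c} - S1) < n" using cS1[OF c] S1 npos by auto
      qed (use less c in auto)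
      then show "ind c * (Fw c S1 c * Fw c (S - {c} - S1) v) = (\<Sum>C'\<in>Pow (S - {c} - S1). \<Phi> c S1 C')"
        unfolding RHS_def \<Phi>_def using FC[OF c] S1 cS1[OF c] by (simp add: sum_distrib_left mult.assoc)
    qed
    also have "\<dots> = (\<Sum>c\<in>S. \<Sum>C'\<in>Pow (S - {c}). \<Sum>S1\<in>Pow (S - {c} - C'). \<Phi> c S1 C')"
      by (rule sum.cong[OF refl], rule sum_Pow_swap) (use less in auto)
    finally have L: "Fw u S v = (\<Sum>c\<in>S. \<Sum>C'\<in>Pow (S - {c}). \<Sum>S1\<in>Pow (S - {c} - C'). \<Phi> c S1 C')" .
    define h where "h = (\<lambda>C c. ind c * Pw c (C - {c}) v * (\<Sum>S1\<in>Pow (S - C). Qbar (card S1) * G (card C - 1) (card (S - C) - card S1)))"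
    have "RHS u S v = (\<Sum>C\<in>Pow S. \<Sum>c\<in>C. h C c)"
      unfolding RHS_def
    proof (rule sum.cong[OF refl])
      fix C assume C: "C \<in> Pow S"
      show "Pw u C v * G (card C) (card S - card C) = (\<Sum>c\<in>C. h C c)"
      proof (cases "C = {}")
        case True then show ?thesis using npos n_def by simp
      next
        case False
        have fC: "finite C" using C less(2) by (rule finite_Pow_sub[rotated])
        then obtain k where k: "card C = Suc k" using False by (metis card_0_eq not0_implies_Suc)
        have cSC: "card (S - C) = card S - card C" using C fC by (simp add: card_Diff_subset)
        have "G (card C) (card S - card C) = (\<Sum>S1\<in>Pow (S - C). Qbar (card S1) * G (card C - 1) (card (S - C) - card S1))"
          using G_Suc_Pow[of "S - C" k] less(2) k cSC by simp
        then show ?thesis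
          unfolding Pw_first[OF fC False] h_def ind_def by (simp add: sum_distrib_right)
      qed
    qed
    also have "\<dots> = (\<Sum>c\<in>S. \<Sum>C'\<in>Pow (S - {c}). h (insert c C') c)"
      by (rule sum_Pow_insert) (use less in auto)
    also have "\<dots> = (\<Sum>c\<in>S. \<Sum>C'\<in>Pow (S - {c}). \<Sum>S1\<in>Pow (S - {c} - C'). \<Phi> c S1 C')"
    proof (intro sum.cong[OF refl])
      fix c C' assume c: "c \<in> S" and C': "C' \<in> Pow (S - {c})"
      have fC': "finite C'" using C' less(2) by (meson PowD finite_Diff rev_finite_subset)
      have cn: "c \<notin> C'" using C' by auto
      have e1: "insert c C' - {c} = C'" using cn by auto
      have e2: "card (insert c C') - 1 = card C'" using cn fC' by simp
      have e3: "S - insert c C' = S - {c} - C'" by auto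
      have e4: "card (S - {c} - C') - card S1 = n - 1 - card S1 - card C'" if "S1 \<in> Pow (S - {c} - C')" for S1
        using cS1[OF c, of C'] C' by simp
      show "h (insert c C') c = (\<Sum>S1\<in>Pow (S - {c} - C'). \<Phi> c S1 C')"
        unfolding h_def \<Phi>_def e1 e2 e3 sum_distrib_left
        by (rule sum.cong[OF refl]) (simp add: e4 algebra_simps)
    qed
    finally show ?thesis using L by simp
  qed
qed

lemma Qbar_Kf: "Qbar n = Kf n"
proof -
  have "Qbar n = Fw 0 {1..n} 0" by (rule Qbar_Fw)
  also have "\<dots> = RHS 0 {1..n} 0" by (rule Fw_main) auto
  also have "\<dots> = Kf n" using RHS_cyc[of "{1..n}" 0] by simp
  finally show ?thesis .
qed



lemma smult_sum2: "smult c (\<Sum>i\<in>S. f i) = (\<Sum>i\<in>S. smult c (f i))"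
  by (induction S rule: infinite_finite_induct) (auto simp: smult_add_right)

lemma QbarF_nth: "QbarF $ n = smult (1 / fact n) (Qbar n)"
  by (simp add: QbarF_def)

lemma EulerF_nth: "EulerF $ n = smult (1 / fact n) (Eulerian n)"
  by (simp add: EulerF_def)

lemma Qbar_QbarF: "Qbar n = smult (fact n) (QbarF $ n)"
  by (simp add: QbarF_nth)

lemma fact_binom_rat:
  assumes "j \<le> m"
  shows "(fact j * fact (m - j) * of_nat (m choose j) :: rat) = fact m"
proof -
  have h: "fact j * fact (m - j) * (m choose j) = (fact m :: nat)" by (rule binomial_fact_lemma[OF assms])
  have "(of_nat (fact j * fact (m - j) * (m choose j)) :: rat) = of_nat (fact m)" using h by simp
  then show ?thesis by (simp only: of_nat_mult of_nat_fact)
qed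

lemma G_fps: "G k m = smult (fact m) ((QbarF ^ k) $ m)"
proof (induction k arbitrary: m)
  case 0 then show ?case by simp
next
  case (Suc k)
  have "G (Suc k) m = (\<Sum>j\<le>m. smult (fact m) (QbarF $ j * (QbarF ^ k) $ (m - j)))"
    unfolding G.simps
  proof (rule sum.cong[OF refl])
    fix j assume "j \<in> {..m}"
    then have jm: "j \<le> m" by simp
    show "of_nat (m choose j) * (Qbar j * G k (m - j)) = smult (fact m) (QbarF $ j * (QbarF ^ k) $ (m - j))"
      unfolding Suc Qbar_QbarF of_nat_mult_conv_smult using fact_binom_rat[OF jm]
      by (simp add: algebra_simps)
  qed
  also have "\<dots> = smult (fact m) ((QbarF ^ Suc k) $ m)"
    by (simp add: fps_mult_nth atLeast0AtMost smult_sum2)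
  finally show ?case .
qed

lemma QbarF_rec: "QbarF $ n = (\<Sum>k\<le>n. EulerF $ k * (QbarF ^ k) $ (n - k))"
proof -
  have "QbarF $ n = smult (1 / fact n) (Kf n)" by (simp add: QbarF_nth Qbar_Kf)
  also have "\<dots> = (\<Sum>k\<le>n. EulerF $ k * (QbarF ^ k) $ (n - k))"
    unfolding Kf_def smult_sum2
  proof (rule sum.cong[OF refl])
    fix k assume "k \<in> {..n}"
    then have kn: "k \<le> n" by simp
    have f: "(fact k * fact (n - k) * of_nat (n choose k) :: rat) = fact n" by (rule fact_binom_rat[OF kn])
    have sc: "1 / fact n * (of_nat (n choose k) * fact (n - k)) = (1 / fact k :: rat)"
      using f by (simp add: field_simps)
    show "smult (1 / fact n) (of_nat (n choose k) * (Eulerian k * G k (n - k))) = EulerF $ k * (QbarF ^ k) $ (n - k)"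
      unfolding G_fps EulerF_nth of_nat_mult_conv_smult using sc by (simp add: mult.assoc)
  qed
  finally show ?thesis .
qed

lemma conj1: "QbarF = EulerF oo (fps_X * QbarF)"
proof (rule fps_ext)
  fix n
  have "(EulerF oo (fps_X * QbarF)) $ n = (\<Sum>i=0..n. EulerF $ i * ((fps_X * QbarF) ^ i) $ n)"
    by (rule fps_compose_nth)
  also have "\<dots> = (\<Sum>i=0..n. EulerF $ i * (QbarF ^ i) $ (n - i))"
    by (rule sum.cong[OF refl]) (simp add: power_mult_distrib fps_X_power_mult_nth)
  also have "\<dots> = QbarF $ n" by (simp add: QbarF_rec atLeast0AtMost)
  finally show "QbarF $ n = (EulerF oo (fps_X * QbarF)) $ n" by simp
qed



lemma tt_eq: "tt = [:0, 1:]"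
  by (simp add: monom_Suc monom_0)

lemma one_minus_tt: "[:1, -1:] = (1 - tt :: rat poly)"
  by (simp add: monom_Suc monom_0 one_pCons)

lemma one_minus_tt': "[:1, -1:] = (1 - [:0, 1:] :: rat poly)"
  by (simp add: one_pCons)

lemma EulerF_0: "EulerF $ 0 = 1"
  by (simp add: EulerF_nth Eulerian_0)

lemma deriv_EulerF: "fps_deriv EulerF = (EulerF + fps_const (tt - 1)) * EulerF"
proof (rule fps_ext)
  fix m
  have "(fps_deriv EulerF) $ m = of_nat (Suc m) * smult (1 / fact (Suc m)) (Eulerian (Suc m))"
    by (simp add: EulerF_nth del: of_nat_Suc)
  also have "\<dots> = smult (of_nat (Suc m) * (1 / fact (Suc m))) (Eulerian (Suc m))"
    by (simp only: of_nat_mult_conv_smult smult_smult)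
  also have "of_nat (Suc m) * (1 / fact (Suc m)) = (1 / fact m :: rat)"
    by (simp add: fact_Suc field_simps del: of_nat_Suc)
  finally have "(fps_deriv EulerF) $ m = smult (1 / fact m) (Eulerian (Suc m))" .
  also have "\<dots> = smult (1 / fact m) (\<Sum>k\<le>m. of_nat (m choose k) * (ew k * Eulerian (m - k)))"
    using Eulerian_rec[of "Suc m"] by simp
  also have "\<dots> = (\<Sum>k\<le>m. (EulerF + fps_const (tt - 1)) $ k * EulerF $ (m - k))"
    unfolding smult_sum2
  proof (rule sum.cong[OF refl])
    fix k assume "k \<in> {..m}"
    then have km: "k \<le> m" by simp
    have f: "(fact k * fact (m - k) * of_nat (m choose k) :: rat) = fact m" by (rule fact_binom_rat[OF km])
    have sc: "1 / fact m * of_nat (m choose k) = (1 / fact k * (1 / fact (m - k)) :: rat)"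
      using f by (simp add: field_simps)
    have bk: "(EulerF + fps_const (tt - 1)) $ k = smult (1 / fact k) (ew k)"
      by (cases k) (auto simp: ew_def EulerF_nth Eulerian_0)
    show "smult (1 / fact m) (of_nat (m choose k) * (ew k * Eulerian (m - k))) = (EulerF + fps_const (tt - 1)) $ k * EulerF $ (m - k)"
      unfolding bk EulerF_nth of_nat_mult_conv_smult using sc by (simp add: mult_ac)
  qed
  also have "\<dots> = ((EulerF + fps_const (tt - 1)) * EulerF) $ m"
    by (simp add: fps_mult_nth atLeast0AtMost)
  finally show "(fps_deriv EulerF) $ m = ((EulerF + fps_const (tt - 1)) * EulerF) $ m" .
qed

lemma exp_nth: "exp_1mt $ n = smult (1 / fact n) ((1 - tt) ^ n)"
  by (simp add: exp_1mt_def one_minus_tt)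

lemma deriv_exp: "fps_deriv exp_1mt = fps_const (1 - tt) * exp_1mt"
proof (rule fps_ext)
  fix n
  show "fps_deriv exp_1mt $ n = (fps_const (1 - tt) * exp_1mt) $ n"
    by (simp add: exp_nth of_nat_mult_conv_smult field_simps del: of_nat_Suc)
qed

lemma fps_ode_zero:
  fixes K A :: "rat poly fps"
  assumes d: "fps_deriv K = A * K" and z: "K $ 0 = 0"
  shows "K = 0"
proof -
  have "K $ n = 0" for n
  proof (induction n rule: less_induct)
    case (less n)
    show ?case
    proof (cases n)
      case 0 then show ?thesis using z by simp
    next
      case (Suc m)
      have "(A * K) $ m = (\<Sum>i=0..m. A $ i * K $ (m - i))" by (rule fps_mult_nth)
      also have "\<dots> = 0" using less Suc by (intro sum.neutral) auto
      finally have "of_nat (Suc m) * K $ Suc m = 0" using arg_cong[OF d, of "\<lambda>f. f $ m"] by simp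
      then show ?thesis using Suc by (simp del: of_nat_Suc)
    qed
  qed
  then show ?thesis by (simp add: fps_eq_iff)
qed

lemma Euler_closed: "EulerF * (1 - fps_const tt * exp_1mt) = fps_const (1 - tt)"
proof -
  define A where "A = EulerF"
  define E where "E = exp_1mt"
  define T where "T = (fps_const tt :: rat poly fps)"
  define K where "K = A * (1 - T * E) - fps_const (1 - tt)"
  have cT: "fps_const (1 - tt) = 1 - T" "fps_const (tt - 1) = T - 1" unfolding T_def by (simp_all add: fps_const_sub)
  have dA: "fps_deriv A = (A + (T - 1)) * A" unfolding A_def using deriv_EulerF cT by simp
  have dE: "fps_deriv E = (1 - T) * E" unfolding E_def using deriv_exp cT by simp
  have dT: "fps_deriv T = 0" unfolding T_def by simp
  have "fps_deriv K = fps_deriv A * (1 - T * E) - A * (T * fps_deriv E)"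
    unfolding K_def by (simp add: dT algebra_simps)
  also have "\<dots> = A * K" unfolding dA dE K_def cT by (simp add: algebra_simps)
  finally have dK: "fps_deriv K = A * K" .
  have K0: "K $ 0 = 0" unfolding K_def A_def E_def T_def by (simp add: EulerF_0 exp_nth)
  have "K = 0" by (rule fps_ode_zero[OF dK K0])
  then show ?thesis unfolding K_def A_def E_def T_def by simp
qed

lemma conj2: "QbarF * (1 - fps_const [:0, 1:] * fps_compose exp_1mt (fps_X * QbarF)) = fps_const [:1, -1:]"
proof -
  define h where "h = fps_X * QbarF"
  have h0: "h $ 0 = 0" unfolding h_def by simp
  have "1 - fps_const tt * (exp_1mt oo h) = (1 - fps_const tt * exp_1mt) oo h"
    by (simp add: fps_compose_sub_distrib fps_compose_mult_distrib[OF h0])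
  then have "QbarF * (1 - fps_const tt * (exp_1mt oo h)) = (EulerF oo h) * ((1 - fps_const tt * exp_1mt) oo h)"
    using conj1 unfolding h_def by simp
  also have "\<dots> = (EulerF * (1 - fps_const tt * exp_1mt)) oo h"
    by (simp add: fps_compose_mult_distrib[OF h0])
  also have "\<dots> = fps_const (1 - tt)" unfolding Euler_closed by simp
  finally have "QbarF * (1 - fps_const tt * (exp_1mt oo h)) = fps_const (1 - tt)" .
  then show ?thesis by (simp only: h_def tt_eq one_minus_tt')
qed



lemma comp_mult_nth:
  fixes a g q :: "rat poly fps"
  shows "(g * (a oo (fps_X * q))) $ n = (\<Sum>j\<le>n. a $ j * (g * (fps_X ^ j * q ^ j)) $ n)"
proof -
  have "(g * (a oo (fps_X * q))) $ n = (\<Sum>i=0..n. g $ i * (a oo (fps_X * q)) $ (n - i))"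
    by (rule fps_mult_nth)
  also have "\<dots> = (\<Sum>i=0..n. g $ i * (\<Sum>j=0..n. a $ j * (fps_X ^ j * q ^ j) $ (n - i)))"
  proof (rule sum.cong[OF refl])
    fix i assume i: "i \<in> {0..n}"
    have "(a oo (fps_X * q)) $ (n - i) = (\<Sum>j=0..n - i. a $ j * (fps_X ^ j * q ^ j) $ (n - i))"
      by (simp add: fps_compose_nth power_mult_distrib)
    also have "\<dots> = (\<Sum>j=0..n. a $ j * (fps_X ^ j * q ^ j) $ (n - i))"
      by (rule sum.mono_neutral_left) (auto simp: fps_X_power_mult_nth)
    finally show "g $ i * (a oo (fps_X * q)) $ (n - i) = g $ i * (\<Sum>j=0..n. a $ j * (fps_X ^ j * q ^ j) $ (n - i))"
      by simp
  qed
  also have "\<dots> = (\<Sum>j=0..n. a $ j * (\<Sum>i=0..n. g $ i * (fps_X ^ j * q ^ j) $ (n - i)))"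
    by (simp add: sum_distrib_left algebra_simps) (rule sum.swap)
  also have "\<dots> = (\<Sum>j\<le>n. a $ j * (g * (fps_X ^ j * q ^ j)) $ n)"
    by (simp add: fps_mult_nth atLeast0AtMost)
  finally show ?thesis .
qed

lemma P_rec:
  fixes a q :: "rat poly fps"
  assumes fx: "q = a oo (fps_X * q)"
  shows "(q ^ Suc k) $ n = (\<Sum>j\<le>n. a $ j * (q ^ (j + k)) $ (n - j))"
proof -
  have "(q ^ Suc k) $ n = (q ^ k * (a oo (fps_X * q))) $ n"
    using fx by (metis power_Suc2)
  also have "\<dots> = (\<Sum>j\<le>n. a $ j * (q ^ k * (fps_X ^ j * q ^ j)) $ n)" by (rule comp_mult_nth)
  also have "\<dots> = (\<Sum>j\<le>n. a $ j * (q ^ (j + k)) $ (n - j))"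
  proof (rule sum.cong[OF refl])
    fix j assume "j \<in> {..n}"
    then have jn: "j \<le> n" by simp
    have e: "q ^ k * (fps_X ^ j * q ^ j) = fps_X ^ j * q ^ (j + k)" by (simp add: power_add algebra_simps)
    show "a $ j * (q ^ k * (fps_X ^ j * q ^ j)) $ n = a $ j * (q ^ (j + k)) $ (n - j)"
      unfolding e using jn by (simp add: fps_X_power_mult_nth)
  qed
  finally show ?thesis .
qed

lemma Xd_nth: "(fps_X * fps_deriv a) $ j = of_nat j * (a :: rat poly fps) $ j"
  by (cases j) simp_all

lemma S2_lemma:
  fixes a :: "rat poly fps"
  shows "of_nat (Suc N) * (\<Sum>j\<le>n. of_nat j * a $ j * (a ^ N) $ (n - j)) = of_nat n * (a ^ Suc N) $ n"
proof -
  have "((fps_X * fps_deriv a) * a ^ N) $ n = (\<Sum>j=0..n. (fps_X * fps_deriv a) $ j * (a ^ N) $ (n - j))"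
    by (rule fps_mult_nth)
  then have "(\<Sum>j\<le>n. of_nat j * a $ j * (a ^ N) $ (n - j)) = ((fps_X * fps_deriv a) * a ^ N) $ n"
    by (simp only: Xd_nth atLeast0AtMost)
  moreover have "fps_const (of_nat (Suc N)) * ((fps_X * fps_deriv a) * a ^ N) = fps_X * fps_deriv (a ^ Suc N)"
  proof -
    have d: "fps_deriv (a ^ Suc N) = fps_const (of_nat (Suc N)) * fps_deriv a * a ^ N"
      using fps_deriv_power[of a "Suc N"] by (simp only: diff_Suc_1)
    show ?thesis unfolding d by (simp only: mult.assoc mult.left_commute[of fps_X])
  qed
  ultimately have "of_nat (Suc N) * (\<Sum>j\<le>n. of_nat j * a $ j * (a ^ N) $ (n - j)) = (fps_X * fps_deriv (a ^ Suc N)) $ n"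
    by (simp only: fps_mult_left_const_nth[symmetric])
  also have "\<dots> = of_nat n * (a ^ Suc N) $ n"
    by (cases n) (simp_all del: of_nat_Suc power_Suc)
  finally show ?thesis .
qed

lemma lagrange:
  fixes a q :: "rat poly fps"
  assumes fx: "q = a oo (fps_X * q)"
  shows "of_nat (n + k) * (q ^ k) $ n = of_nat k * (a ^ (n + k)) $ n"
proof (induction n arbitrary: k rule: less_induct)
  case (less n)
  show ?case
  proof (induction k)
    case 0 then show ?case by simp
  next
    case (Suc k')
    define N where "N = n + k'"
    show ?case
    proof (cases "N = 0")
      case True
      then have "n = 0" "k' = 0" unfolding N_def by auto
      moreover have "q $ 0 = a $ 0" using fx by (metis fps_compose_nth_0)
      ultimately show ?thesis by simp
    next
      case False
      have T: "of_nat N * (q ^ (j + k')) $ (n - j) = of_nat (j + k') * (a ^ N) $ (n - j)" if "j \<le> n" for j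
      proof (cases "j = 0")
        case True then show ?thesis using Suc.IH N_def by simp
      next
        case False
        then have "n - j < n" using that by simp
        from less[OF this, of "j + k'"] show ?thesis using that unfolding N_def by simp
      qed
      define Asum where "Asum = (a ^ Suc N) $ n"
      have S3: "(\<Sum>j\<le>n. a $ j * (a ^ N) $ (n - j)) = Asum"
        unfolding Asum_def by (simp add: fps_mult_nth atLeast0AtMost)
      have "of_nat N * (q ^ Suc k') $ n = (\<Sum>j\<le>n. a $ j * (of_nat N * (q ^ (j + k')) $ (n - j)))"
        unfolding P_rec[OF fx] sum_distrib_left by (simp add: algebra_simps)
      also have "\<dots> = (\<Sum>j\<le>n. a $ j * (of_nat (j + k') * (a ^ N) $ (n - j)))"
        by (rule sum.cong[OF refl]) (simp add: T)
      also have "\<dots> = (\<Sum>j\<le>n. of_nat j * a $ j * (a ^ N) $ (n - j)) + of_nat k' * (\<Sum>j\<le>n. a $ j * (a ^ N) $ (n - j))"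
        by (simp add: sum_distrib_left sum.distrib algebra_simps)
      finally have E1: "of_nat N * (q ^ Suc k') $ n = (\<Sum>j\<le>n. of_nat j * a $ j * (a ^ N) $ (n - j)) + of_nat k' * Asum"
        using S3 by simp
      have "of_nat N * (of_nat (Suc N) * (q ^ Suc k') $ n) = of_nat (Suc N) * (of_nat N * (q ^ Suc k') $ n)"
        by (simp add: algebra_simps)
      also have "\<dots> = of_nat n * Asum + of_nat (Suc N) * of_nat k' * Asum"
        unfolding E1 distrib_left S2_lemma Asum_def by (simp add: algebra_simps)
      also have "\<dots> = of_nat (n + Suc N * k') * Asum" by (simp add: algebra_simps)
      also have "n + Suc N * k' = N * Suc k'" unfolding N_def by (simp add: algebra_simps)
      finally have "of_nat N * (of_nat (Suc N) * (q ^ Suc k') $ n) = of_nat N * (of_nat (Suc k') * Asum)"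
        by (simp add: algebra_simps)
      moreover have "(of_nat N :: rat poly) \<noteq> 0" using False by simp
      ultimately have "of_nat (Suc N) * (q ^ Suc k') $ n = of_nat (Suc k') * Asum" by simp
      then show ?thesis unfolding Asum_def N_def by simp
    qed
  qed
qed

lemma conj3: "Qbar n = smult (fact n / of_nat (n + 1)) (fps_nth (EulerF ^ (n + 1)) n)"
proof -
  have "of_nat (n + 1) * (QbarF ^ 1) $ n = of_nat 1 * (EulerF ^ (n + 1)) $ n"
    by (rule lagrange[OF conj1])
  then have "smult (of_nat (n + 1)) ((QbarF ^ 1) $ n) = smult (of_nat 1) ((EulerF ^ (n + 1)) $ n)"
    by (simp only: of_nat_mult_conv_smult)
  then have e: "smult (of_nat (n + 1)) (QbarF $ n) = (EulerF ^ (n + 1)) $ n"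
    by (simp only: power_one_right of_nat_1 smult_1_left)
  have r: "(1 / of_nat (n + 1)) * of_nat (n + 1) = (1::rat)" by simp
  have "QbarF $ n = smult ((1 / of_nat (n + 1)) * of_nat (n + 1)) (QbarF $ n)" unfolding r by simp
  also have "\<dots> = smult (1 / of_nat (n + 1)) ((EulerF ^ (n + 1)) $ n)"
    by (simp only: e smult_smult[symmetric])
  finally have "QbarF $ n = smult (1 / of_nat (n + 1)) ((EulerF ^ (n + 1)) $ n)" .
  then show ?thesis by (simp add: Qbar_QbarF)
qed

theorem theorem2p3:
  shows "QbarF = fps_compose EulerF (fps_X * QbarF)
     \<and> QbarF * (1 - fps_const [:0, 1:] * fps_compose exp_1mt (fps_X * QbarF)) = fps_const [:1, -1:]
     \<and> (\<forall>n. Qbar n = smult (fact n / of_nat (n + 1)) (fps_nth (EulerF ^ (n + 1)) n))"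
  using conj1 conj2 conj3 by blast

end
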